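(* For every $\theta,\bar\theta\in\mathbb R^m$ there exists a stochastic policy $\mu_{\theta,\bar\theta}$ such that \[ T_\alpha(\theta)-T_\alpha(\bar\theta)=A_{\mu_{\theta,\bar\theta}}(\theta-\bar\theta). \] In particular, suppose $\theta^\star$ is a projected Bellman fixed point, $\theta_{k+1}=T_\alpha(\theta_k)$, and $x_k:=\theta_k-\theta^\star$. Then $x_{k+1}=A_{\mu_k}x_k$ for all $k\ge0$, where each $\mu_k$ is a stochastic policy depending measurably on $(\theta_k,\theta^\star)$.
   Context: Consider a finite discounted MDP with state space $\mathcal S=\{1,\dots,|\mathcal S|\}$, action space $\mathcal A=\{1,\dots,|\mathcal A|\}$, transition probabilities $P(s'\mid s,a)$, expected reward $R(s,a)$, and discount factor $\gamma\in(0,1)$. State-action vectors are ordered as $(1,1),(2,1),\dots,(|\mathcal S|,1),(1,2),\dots$. The matrix $P\in\mathbb R^{|\mathcal S||\mathcal A|\times|\mathcal S|}$ has rows $P(\cdot\mid s,a)$, and $R$ has entries $R(s,a)$. A stochastic policy is a map $\mu:\mathcal S\to\Delta_{|\mathcal A|}$, where $\Delta_{|\mathcal A|}$ is the probability simplex. The matrix $\Pi^\mu\in\mathbb R^{|\mathcal S|\times|\mathcal S||\mathcal A|}$ has entry $\mu(a\mid s)$ in row $s$, column $(s,a)$, and zeros elsewhere. The feature matrix $\Phi\in\mathbb R^{|\mathcal S||\mathcal A|\times m}$ has full column rank and rows $\phi(s,a)^\top$. Define $V_\theta(s):=\max_a\phi(s,a)^\top\theta$. The distribution $d$ on $\mathcal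 S\times\mathcal A$ satisfies $d>0$ everywhere, and $D=\mathrm{diag}(d)$. The step size is $\alpha\in(0,1)$. Define $g(\theta):=\Phi^\top D(R+\gamma PV_\theta-\Phi\theta)$ and $T_\alpha(\theta):=\theta+\alpha g(\theta)$. A projected Bellman fixed point is a $\theta^\star$ with $g(\theta^\star)=0$. For a stochastic policy $\mu$, define $A_\mu:=I-\alpha\Phi^\top D\Phi+\alpha\gamma\Phi^\top DP\Pi^\mu\Phi$. *)

theory Defs
  imports "HOL-Analysis.Analysis"
begin

definition diag_mat :: "real ^ 'n \<Rightarrow> real ^ 'n ^ 'n" where
  "diag_mat d = (\<chi> i j. if i = j then d $ i else 0)"

definition stochastic_policy :: "('s::finite \<Rightarrow> 'a::finite \<Rightarrow> real) \<Rightarrow> bool" where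
  "stochastic_policy \<mu> \<longleftrightarrow> (\<forall>s a. 0 \<le> \<mu> s a) \<and> (\<forall>s. (\<Sum>a\<in>UNIV. \<mu> s a) = 1)"

definition transition_matrix :: "real ^ 's ^ ('s::finite \<times> 'a::finite) \<Rightarrow> bool" where
  "transition_matrix P \<longleftrightarrow> (\<forall>sa s'. 0 \<le> P $ sa $ s') \<and> (\<forall>sa. (\<Sum>s'\<in>UNIV. P $ sa $ s') = 1)"

definition Pi_mat :: "('s::finite \<Rightarrow> 'a::finite \<Rightarrow> real) \<Rightarrow> real ^ ('s \<times> 'a) ^ 's" where
  "Pi_mat \<mu> = (\<chi> s sa. if fst sa = s then \<mu> s (snd sa) else 0)"

definition Vtheta :: "real ^ 'm ^ ('s::finite \<times> 'a::finite) \<Rightarrow> real ^ 'm \<Rightarrow> real ^ 's" where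
  "Vtheta \<Phi> \<theta> = (\<chi> s. Max ((\<lambda>a. (\<Phi> $ (s, a)) \<bullet> \<theta>) ` UNIV))"

definition gmap :: "real ^ 'm ^ ('s::finite \<times> 'a::finite) \<Rightarrow> real ^ ('s \<times> 'a) \<Rightarrow> real ^ 's ^ ('s \<times> 'a)
   \<Rightarrow> real ^ ('s \<times> 'a) \<Rightarrow> real \<Rightarrow> real ^ 'm \<Rightarrow> real ^ 'm" where
  "gmap \<Phi> d P R \<gamma> \<theta> =
     (transpose \<Phi> ** diag_mat d) *v (R + \<gamma> *\<^sub>R (P *v Vtheta \<Phi> \<theta>) - \<Phi> *v \<theta>)"

definition Tmap :: "real ^ 'm ^ ('s::finite \<times> 'a::finite) \<Rightarrow> real ^ ('s \<times> 'a) \<Rightarrow> real ^ 's ^ ('s \<times> 'a)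
   \<Rightarrow> real ^ ('s \<times> 'a) \<Rightarrow> real \<Rightarrow> real \<Rightarrow> real ^ 'm \<Rightarrow> real ^ 'm" where
  "Tmap \<Phi> d P R \<gamma> \<alpha> \<theta> = \<theta> + \<alpha> *\<^sub>R gmap \<Phi> d P R \<gamma> \<theta>"

definition Amat :: "real ^ 'm ^ ('s::finite \<times> 'a::finite) \<Rightarrow> real ^ ('s \<times> 'a) \<Rightarrow> real ^ 's ^ ('s \<times> 'a)
   \<Rightarrow> real \<Rightarrow> real \<Rightarrow> ('s \<Rightarrow> 'a \<Rightarrow> real) \<Rightarrow> real ^ 'm ^ 'm" where
  "Amat \<Phi> d P \<gamma> \<alpha> \<mu> =
     mat 1 - \<alpha> *\<^sub>R (transpose \<Phi> ** diag_mat d ** \<Phi>)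
       + (\<alpha> * \<gamma>) *\<^sub>R (transpose \<Phi> ** diag_mat d ** P ** Pi_mat \<mu> ** \<Phi>)"

end

theory Submission
  imports Defs
begin

definition wgt :: "('a::finite \<Rightarrow> real) \<Rightarrow> real \<Rightarrow> 'a \<Rightarrow> real" where
  "wgt c t a = (if (\<Sum>b\<in>UNIV. max (c b - t) 0) > 0 \<and> (\<Sum>b\<in>UNIV. max (t - c b) 0) > 0
     then ((\<Sum>b\<in>UNIV. (max (c b - t) 0)^2) * max (t - c a) 0 + (\<Sum>b\<in>UNIV. (max (t - c b) 0)^2) * max (c a - t) 0)
          / ((\<Sum>b\<in>UNIV. (max (c b - t) 0)^2) * (\<Sum>b\<in>UNIV. max (t - c b) 0) + (\<Sum>b\<in>UNIV. (max (t - c b) 0)^2) * (\<Sum>b\<in>UNIV. max (c b - t) 0))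
     else (if c a = t then 1 else 0) / (\<Sum>b\<in>UNIV. if c b = t then 1 else 0))"

lemma wgt_props:
  fixes c :: "'a::finite \<Rightarrow> real"
  assumes "\<exists>a. t \<le> c a" "\<exists>a. c a \<le> t"
  shows "(\<forall>a. 0 \<le> wgt c t a) \<and> (\<Sum>a\<in>UNIV. wgt c t a) = 1 \<and> (\<Sum>a\<in>UNIV. wgt c t a * c a) = t"
proof -
  define p where "p b = max (c b - t) 0" for b
  define n where "n b = max (t - c b) 0" for b
  define A where "A = (\<Sum>b\<in>UNIV. (p b)^2)"
  define B where "B = (\<Sum>b\<in>UNIV. (n b)^2)"
  define Sp where "Sp = sum p UNIV"
  define Sn where "Sn = sum n UNIV"
  define e where "e b = (if c b = t then 1 else (0::real))" for b
  have w: "wgt c t a = (if Sp > 0 \<and> Sn > 0 then (A * n a + B * p a) / (A * Sn + B * Sp) else e a / sum e UNIV)" for a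
    unfolding wgt_def p_def n_def A_def B_def Sp_def Sn_def e_def by simp
  have p0: "p b \<ge> 0" "n b \<ge> 0" for b unfolding p_def n_def by auto
  have cp: "c b - t = p b - n b" for b unfolding p_def n_def by auto
  have pn: "p b * n b = 0" for b unfolding p_def n_def by auto
  show ?thesis
  proof (cases "Sp > 0 \<and> Sn > 0")
    case True
    then obtain b1 where "p b1 > 0" unfolding Sp_def
      by (metis less_irrefl sum_nonpos not_le)
    then have A: "A > 0" unfolding A_def
      by (intro sum_pos2[where i=b1]) auto
    from True obtain b2 where "n b2 > 0" unfolding Sn_def
      by (metis less_irrefl sum_nonpos not_le)
    then have B: "B > 0" unfolding B_def
      by (intro sum_pos2[where i=b2]) auto
    have Z: "A * Sn + B * Sp > 0" using A B True by (simp add: add_pos_pos)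
    have nn: "0 \<le> wgt c t a" for a using w[of a] True A B Z p0[of a]
      by (simp add: divide_nonneg_pos add_nonneg_nonneg)
    have s1: "(\<Sum>a\<in>UNIV. wgt c t a) = 1"
    proof -
      have "(\<Sum>a\<in>UNIV. wgt c t a) = (\<Sum>a\<in>UNIV. (A * n a + B * p a)) / (A * Sn + B * Sp)"
        unfolding sum_divide_distrib using True by (simp add: w)
      also have "(\<Sum>a\<in>UNIV. (A * n a + B * p a)) = A * Sn + B * Sp"
        unfolding sum.distrib sum_distrib_left[symmetric] Sp_def Sn_def by simp
      finally show ?thesis using Z by simp
    qed
    have "(\<Sum>a\<in>UNIV. (A * n a + B * p a) * (c a - t)) = 0"
    proof -
      have "(\<Sum>a\<in>UNIV. (A * n a + B * p a) * (c a - t)) = (\<Sum>a\<in>UNIV. B * (p a)^2 - A * (n a)^2)"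
        apply (rule sum.cong, simp)
        subgoal for a using pn[of a] unfolding cp by (simp add: algebra_simps power2_eq_square)
        done
      also have "\<dots> = 0" by (simp add: sum_subtractf sum_distrib_left[symmetric] A_def B_def)
      finally show ?thesis .
    qed
    moreover have "(\<Sum>a\<in>UNIV. wgt c t a * (c a - t)) = (\<Sum>a\<in>UNIV. (A * n a + B * p a) * (c a - t)) / (A * Sn + B * Sp)"
      unfolding sum_divide_distrib using True by (simp add: w)
    ultimately have "(\<Sum>a\<in>UNIV. wgt c t a * (c a - t)) = 0" by simp
    then have "(\<Sum>a\<in>UNIV. wgt c t a * c a) - t * (\<Sum>a\<in>UNIV. wgt c t a) = 0"
      by (simp add: algebra_simps sum_subtractf sum_distrib_left sum_distrib_right)
    with s1 nn show ?thesis by simp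
  next
    case False
    have "\<exists>a. c a = t"
    proof (cases "Sp > 0")
      case True
      with False have "Sn \<le> 0" by auto
      then have "Sn = 0" using p0 unfolding Sn_def by (meson antisym sum_nonneg)
      then have "\<forall>b. n b = 0" unfolding Sn_def using p0 by (simp add: sum_nonneg_eq_0_iff)
      moreover obtain a where "c a \<le> t" using assms(2) by blast
      ultimately have "c a = t" unfolding n_def by (smt (verit))
      then show ?thesis by blast
    next
      case False
      then have "Sp = 0" using p0 unfolding Sp_def by (meson antisym sum_nonneg not_le)
      then have "\<forall>b. p b = 0" unfolding Sp_def using p0 by (simp add: sum_nonneg_eq_0_iff)
      moreover obtain a where "t \<le> c a" using assms(1) by blast
      ultimately have "c a = t" unfolding p_def by (smt (verit))
      then show ?thesis by blast
    qed
    then obtain a0 where a0: "c a0 = t" by blast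
    have E: "sum e UNIV > 0" by (rule sum_pos2[where i=a0]) (auto simp: e_def a0)
    have nn: "0 \<le> wgt c t a" for a using w[of a] False E by (simp add: e_def)
    have s1: "(\<Sum>a\<in>UNIV. wgt c t a) = 1"
    proof -
      have "(\<Sum>a\<in>UNIV. wgt c t a) = (\<Sum>a\<in>UNIV. e a) / sum e UNIV"
        unfolding sum_divide_distrib using False by (intro sum.cong) (auto simp: w)
      then show ?thesis using E by simp
    qed
    have "(\<Sum>a\<in>UNIV. wgt c t a * c a) = (\<Sum>a\<in>UNIV. wgt c t a * t)"
      by (rule sum.cong) (auto simp: w False e_def)
    with s1 nn show ?thesis by (simp add: sum_distrib_right[symmetric])
  qed
qed


definition pol :: "real ^ 'm ^ ('s::finite \<times> 'a::finite) \<Rightarrow> real ^ 'm \<Rightarrow> real ^ 'm \<Rightarrow> 's \<Rightarrow> 'a \<Rightarrow> real" where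
  "pol \<Phi> \<theta> \<theta>b s = wgt (\<lambda>a. (\<Phi> $ (s, a)) \<bullet> (\<theta> - \<theta>b)) (Vtheta \<Phi> \<theta> $ s - Vtheta \<Phi> \<theta>b $ s)"

lemma Pi_mat_apply: "(Pi_mat \<mu> *v y) $ s = (\<Sum>a\<in>UNIV. \<mu> s a * y $ (s, a))"
proof -
  have "(Pi_mat \<mu> *v y) $ s = (\<Sum>sa\<in>UNIV. (if fst sa = s then \<mu> s (snd sa) else 0) * y $ sa)"
    by (simp add: Pi_mat_def matrix_vector_mult_def)
  also have "\<dots> = (\<Sum>s'\<in>UNIV. \<Sum>a\<in>UNIV. (if s' = s then \<mu> s a else 0) * y $ (s', a))"
    by (simp add: sum.cartesian_product split_def)
  also have "\<dots> = (\<Sum>a\<in>UNIV. \<mu> s a * y $ (s, a))"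
    by (subst sum.swap) (simp add: if_distrib[of "\<lambda>x. x * _"] sum.delta cong: if_cong)
  finally show ?thesis .
qed

lemma Vtheta_props:
  "\<exists>a. Vtheta \<Phi> \<theta> $ s = (\<Phi> $ (s, a)) \<bullet> \<theta>" "(\<Phi> $ (s, a)) \<bullet> \<theta> \<le> Vtheta \<Phi> \<theta> $ s"
proof -
  have "Max ((\<lambda>a. (\<Phi> $ (s, a)) \<bullet> \<theta>) ` UNIV) \<in> (\<lambda>a. (\<Phi> $ (s, a)) \<bullet> \<theta>) ` UNIV"
    by (rule Max_in) auto
  then obtain a' where "Max ((\<lambda>a. (\<Phi> $ (s, a)) \<bullet> \<theta>) ` UNIV) = (\<Phi> $ (s, a')) \<bullet> \<theta>" by blast
  then show "\<exists>a. Vtheta \<Phi> \<theta> $ s = (\<Phi> $ (s, a)) \<bullet> \<theta>" by (auto simp: Vtheta_def)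
  show "(\<Phi> $ (s, a)) \<bullet> \<theta> \<le> Vtheta \<Phi> \<theta> $ s" by (auto simp: Vtheta_def intro!: Max_ge)
qed

lemma pol_props:
  "stochastic_policy (pol \<Phi> \<theta> \<theta>b)"
  "Pi_mat (pol \<Phi> \<theta> \<theta>b) *v (\<Phi> *v (\<theta> - \<theta>b)) = Vtheta \<Phi> \<theta> - Vtheta \<Phi> \<theta>b"
proof -
  have W: "(\<forall>a. 0 \<le> pol \<Phi> \<theta> \<theta>b s a) \<and> (\<Sum>a\<in>UNIV. pol \<Phi> \<theta> \<theta>b s a) = 1 \<and>
     (\<Sum>a\<in>UNIV. pol \<Phi> \<theta> \<theta>b s a * ((\<Phi> $ (s, a)) \<bullet> (\<theta> - \<theta>b))) = Vtheta \<Phi> \<theta> $ s - Vtheta \<Phi> \<theta>b $ s" for s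
    unfolding pol_def
  proof (rule wgt_props)
    obtain a1 where a1: "Vtheta \<Phi> \<theta> $ s = (\<Phi> $ (s, a1)) \<bullet> \<theta>" using Vtheta_props(1) by blast
    have "(\<Phi> $ (s, a1)) \<bullet> \<theta>b \<le> Vtheta \<Phi> \<theta>b $ s" by (rule Vtheta_props(2))
    then show "\<exists>a. Vtheta \<Phi> \<theta> $ s - Vtheta \<Phi> \<theta>b $ s \<le> (\<Phi> $ (s, a)) \<bullet> (\<theta> - \<theta>b)"
      using a1 by (intro exI[of _ a1]) (simp add: inner_diff_right)
    obtain a2 where a2: "Vtheta \<Phi> \<theta>b $ s = (\<Phi> $ (s, a2)) \<bullet> \<theta>b" using Vtheta_props(1) by blast
    have "(\<Phi> $ (s, a2)) \<bullet> \<theta> \<le> Vtheta \<Phi> \<theta> $ s" by (rule Vtheta_props(2))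
    then show "\<exists>a. (\<Phi> $ (s, a)) \<bullet> (\<theta> - \<theta>b) \<le> Vtheta \<Phi> \<theta> $ s - Vtheta \<Phi> \<theta>b $ s"
      using a2 by (intro exI[of _ a2]) (simp add: inner_diff_right)
  qed
  show "stochastic_policy (pol \<Phi> \<theta> \<theta>b)" using W by (simp add: stochastic_policy_def)
  have phi: "(\<Phi> *v x) $ sa = (\<Phi> $ sa) \<bullet> x" for x sa
    by (simp add: matrix_vector_mult_def inner_vec_def mult.commute)
  show "Pi_mat (pol \<Phi> \<theta> \<theta>b) *v (\<Phi> *v (\<theta> - \<theta>b)) = Vtheta \<Phi> \<theta> - Vtheta \<Phi> \<theta>b"
    using W by (simp add: vec_eq_iff Pi_mat_apply phi)
qed

lemma T_diff:
  assumes "Pi_mat \<mu> *v (\<Phi> *v (\<theta> - \<theta>b)) = Vtheta \<Phi> \<theta> - Vtheta \<Phi> \<theta>b"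
  shows "Tmap \<Phi> d P R \<gamma> \<alpha> \<theta> - Tmap \<Phi> d P R \<gamma> \<alpha> \<theta>b = Amat \<Phi> d P \<gamma> \<alpha> \<mu> *v (\<theta> - \<theta>b)"
proof -
  define G where "G = transpose \<Phi> ** diag_mat d"
  have "Amat \<Phi> d P \<gamma> \<alpha> \<mu> *v (\<theta> - \<theta>b) = (\<theta> - \<theta>b) - \<alpha> *\<^sub>R (G *v (\<Phi> *v (\<theta> - \<theta>b)))
      + (\<alpha> * \<gamma>) *\<^sub>R (G *v (P *v (Pi_mat \<mu> *v (\<Phi> *v (\<theta> - \<theta>b)))))"
    unfolding Amat_def G_def
    by (simp add: matrix_vector_mult_add_rdistrib matrix_vector_mult_diff_rdistrib
        scaleR_matrix_vector_assoc[symmetric] matrix_vector_mul_assoc matrix_mul_assoc)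
  also have "\<dots> = Tmap \<Phi> d P R \<gamma> \<alpha> \<theta> - Tmap \<Phi> d P R \<gamma> \<alpha> \<theta>b"
    unfolding assms Tmap_def gmap_def G_def[symmetric]
    by (simp add: algebra_simps)
  finally show ?thesis by simp
qed

lemma pol_meas: "(\<lambda>p. pol \<Phi> (fst p) (snd p) s a) \<in> borel_measurable borel"
  unfolding pol_def wgt_def Vtheta_def vec_lambda_beta
  by (subst borel_prod[symmetric]) measurable

theorem proposition1:
  fixes \<Phi> :: "real ^ 'm::finite ^ ('s::finite \<times> 'a::finite)"
    and P :: "real ^ 's ^ ('s \<times> 'a)"
    and R d :: "real ^ ('s \<times> 'a)"
    and \<gamma> \<alpha> :: real
  assumes P: "transition_matrix P"
    and gamma: "0 < \<gamma>" "\<gamma> < 1"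
    and alpha: "0 < \<alpha>" "\<alpha> < 1"
    and d_pos: "\<forall>sa. 0 < d $ sa"
    and rank: "rank \<Phi> = CARD('m)"
  shows "(\<forall>\<theta> \<theta>b. \<exists>\<mu>. stochastic_policy \<mu> \<and>
            Tmap \<Phi> d P R \<gamma> \<alpha> \<theta> - Tmap \<Phi> d P R \<gamma> \<alpha> \<theta>b = Amat \<Phi> d P \<gamma> \<alpha> \<mu> *v (\<theta> - \<theta>b))
       \<and> (\<exists>M :: real ^ 'm \<Rightarrow> real ^ 'm \<Rightarrow> ('s \<Rightarrow> 'a \<Rightarrow> real).
            (\<forall>s a. (\<lambda>p. M (fst p) (snd p) s a) \<in> borel_measurable borel) \<and>
            (\<forall>\<theta> \<theta>b. stochastic_policy (M \<theta> \<theta>b)) \<and>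
            (\<forall>\<theta>star (\<theta>seq :: nat \<Rightarrow> real ^ 'm).
               gmap \<Phi> d P R \<gamma> \<theta>star = 0 \<longrightarrow>
               (\<forall>k. \<theta>seq (Suc k) = Tmap \<Phi> d P R \<gamma> \<alpha> (\<theta>seq k)) \<longrightarrow>
               (\<forall>k. \<theta>seq (Suc k) - \<theta>star
                      = Amat \<Phi> d P \<gamma> \<alpha> (M (\<theta>seq k) \<theta>star) *v (\<theta>seq k - \<theta>star))))"
proof
  have key: "stochastic_policy (pol \<Phi> \<theta> \<theta>b) \<and>
     Tmap \<Phi> d P R \<gamma> \<alpha> \<theta> - Tmap \<Phi> d P R \<gamma> \<alpha> \<theta>b = Amat \<Phi> d P \<gamma> \<alpha> (pol \<Phi> \<theta> \<theta>b) *v (\<theta> - \<theta>b)" for \<theta> \<theta>b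
    using pol_props[of \<Phi> \<theta> \<theta>b] T_diff[of "pol \<Phi> \<theta> \<theta>b" \<Phi> \<theta> \<theta>b d P R \<gamma> \<alpha>] by blast
  then show "\<forall>\<theta> \<theta>b. \<exists>\<mu>. stochastic_policy \<mu> \<and>
            Tmap \<Phi> d P R \<gamma> \<alpha> \<theta> - Tmap \<Phi> d P R \<gamma> \<alpha> \<theta>b = Amat \<Phi> d P \<gamma> \<alpha> \<mu> *v (\<theta> - \<theta>b)"
    by blast
  show "\<exists>M :: real ^ 'm \<Rightarrow> real ^ 'm \<Rightarrow> ('s \<Rightarrow> 'a \<Rightarrow> real).
            (\<forall>s a. (\<lambda>p. M (fst p) (snd p) s a) \<in> borel_measurable borel) \<and>
            (\<forall>\<theta> \<theta>b. stochastic_policy (M \<theta> \<theta>b)) \<and>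
            (\<forall>\<theta>star (\<theta>seq :: nat \<Rightarrow> real ^ 'm).
               gmap \<Phi> d P R \<gamma> \<theta>star = 0 \<longrightarrow>
               (\<forall>k. \<theta>seq (Suc k) = Tmap \<Phi> d P R \<gamma> \<alpha> (\<theta>seq k)) \<longrightarrow>
               (\<forall>k. \<theta>seq (Suc k) - \<theta>star
                      = Amat \<Phi> d P \<gamma> \<alpha> (M (\<theta>seq k) \<theta>star) *v (\<theta>seq k - \<theta>star)))"
  proof (intro exI[of _ "pol \<Phi>"] conjI allI impI)
    show "(\<lambda>p. pol \<Phi> (fst p) (snd p) s a) \<in> borel_measurable borel" for s a by (rule pol_meas)
    show "stochastic_policy (pol \<Phi> \<theta> \<theta>b)" for \<theta> \<theta>b using key by blast
    fix \<theta>star and \<theta>seq :: "nat \<Rightarrow> real ^ 'm" and k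
    assume g: "gmap \<Phi> d P R \<gamma> \<theta>star = 0" and it: "\<forall>k. \<theta>seq (Suc k) = Tmap \<Phi> d P R \<gamma> \<alpha> (\<theta>seq k)"
    have "Tmap \<Phi> d P R \<gamma> \<alpha> \<theta>star = \<theta>star" using g by (simp add: Tmap_def)
    then show "\<theta>seq (Suc k) - \<theta>star = Amat \<Phi> d P \<gamma> \<alpha> (pol \<Phi> (\<theta>seq k) \<theta>star) *v (\<theta>seq k - \<theta>star)"
      using key[of "\<theta>seq k" \<theta>star] it by simp
  qed
qed

end
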